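(* Given $\lambda\in(0,1-q^{-1})$, $m=cm'\geq cm''s$ with $c,m',m'',s\in\mathbb{N}$ and $c>1/(1-H_q(\lambda))$, it is possible to exactly recover any $\mathbf x\in\mathcal{S}_q$ from $\mathbf y=\mathbf A\mathbf x+\mathbf n$ with probability at least $1-P_e$ if $\mathbf A=\mathbf G\mathbf A'$, where $\mathbf G$ is the generator matrix of an $[m,m',d]_q$ linear code achieving probability of error at most $P_e$ over the $q$-ary symmetric channel with crossover probability $\lambda$, and some set of $m''s$ rows of $\mathbf A'$ forms a matrix $\mathbf A''$ such that $\phi_s(\mathbf A'')$ is the parity check matrix of an $[n,n-m'',d']_{q^s}$ linear code with $d'>2b$.
   Context: Let $q$ be a prime or prime power, $\mathbb F_q$ the finite field with $q$ elements, and $b<n$ positive integers. $\mathcal S_q$ denotes the set of vectors $\mathbf x\in\mathbb F_q^n$ with at most $b$ nonzero entries (the finite alphabet of size $q$, containing $0$, is identified with $\mathbb F_q$ via a bijection sending $0$ to the zero of $\mathbb F_q$). Measurements are $\mathbf y=\mathbf A\mathbf x+\mathbf n$ with sensing matrix $\mathbf A\in\mathbb F_q^{m\times n}$, where the noise $\mathbf n\in\mathbb F_q^m$ is generated by $m$ independent uses of a $q$-ary symmetric channel with crossover probability $\lambda$: each entry equals $0$ with probability $1-\lambda$ and each nonzero $a\in\mathbb F_q$ with probability $\lambda/(q-1)$. An $[N,K,D]_q$ code is a linear code over $\mathbb F_q$ of length $N$, with $q^K$ codewords and minimum Hamming distance $D$. A linear code achieves probability of error at most $P_e$ over a channel if,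 for every codeword, the probability that a nearest-neighbor-codeword decoder decodes it erroneously (given it was sent) is at most $P_e$. $H_q(x)=-x\log_q x-(1-x)\log_q(1-x)+x\log_q(q-1)$ for $x\in(0,1)$. Field lifting: fix a primitive polynomial of degree $s$ over $\mathbb F_q$ with root $\alpha$, a primitive element of $\mathbb F_{q^s}$; for a matrix $\mathbf C=[c_{ij}]\in\mathbb F_q^{Ms\times n}$, $\phi_s(\mathbf C)=[c'_{kl}]\in\mathbb F_{q^s}^{M\times n}$ with $c'_{kl}=\sum_{t=0}^{s-1}c_{(k-1)s+t+1,l}\,\alpha^t$ (the $k$-th row combines the $s$ consecutive rows of block $k$ with weights $1,\alpha,\ldots,\alpha^{s-1}$). *)

theory Defs
  imports "Jordan_Normal_Form.Matrix" "HOL-Computational_Algebra.Polynomial"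
    "HOL-Computational_Algebra.Factorial_Ring"
begin

definition Hq :: "nat \<Rightarrow> real \<Rightarrow> real" where
  "Hq q x = - x * log q x - (1 - x) * log q (1 - x) + x * log q (real q - 1)"

definition hamming_wt :: "'a::zero vec \<Rightarrow> nat" where
  "hamming_wt v = card {i. i < dim_vec v \<and> v $ i \<noteq> 0}"

definition hamming_dist :: "'a vec \<Rightarrow> 'a vec \<Rightarrow> nat" where
  "hamming_dist u v = card {i. i < dim_vec u \<and> u $ i \<noteq> v $ i}"

definition sparse_vecs :: "nat \<Rightarrow> nat \<Rightarrow> 'a::zero vec set" where
  "sparse_vecs n b = {x \<in> carrier_vec n. hamming_wt x \<le> b}"

(* probability of a noise vector of length dim_vec v under m independent uses
   of the q-ary symmetric channel with crossover probability lam *)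
definition sym_noise_prob :: "real \<Rightarrow> 'a::{zero,finite} vec \<Rightarrow> real" where
  "sym_noise_prob lam v =
     (\<Prod>i<dim_vec v. if v $ i = 0 then 1 - lam else lam / (real (card (UNIV :: 'a set)) - 1))"

definition noise_event_prob :: "real \<Rightarrow> nat \<Rightarrow> ('a::{zero,finite} vec \<Rightarrow> bool) \<Rightarrow> real" where
  "noise_event_prob lam N E = (\<Sum>v \<in> {v \<in> carrier_vec N. E v}. sym_noise_prob lam v)"

definition gen_code :: "'a::comm_ring_1 mat \<Rightarrow> 'a vec set" where
  "gen_code G = {G *\<^sub>v u | u. u \<in> carrier_vec (dim_col G)}"

definition min_dist :: "'a vec set \<Rightarrow> nat" where
  "min_dist C = Inf {hamming_dist c c' | c c'. c \<in> C \<and> c' \<in> C \<and> c \<noteq> c'}"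

definition is_generator_matrix :: "'a::{field,finite} mat \<Rightarrow> nat \<Rightarrow> nat \<Rightarrow> nat \<Rightarrow> bool" where
  "is_generator_matrix G N K D \<longleftrightarrow>
     G \<in> carrier_mat N K \<and> card (gen_code G) = card (UNIV :: 'a set) ^ K \<and> min_dist (gen_code G) = D"

definition null_code :: "'a::comm_ring_1 mat \<Rightarrow> nat \<Rightarrow> 'a vec set" where
  "null_code H N = {v \<in> carrier_vec N. H *\<^sub>v v = 0\<^sub>v (dim_row H)}"

definition is_parity_check_matrix :: "'a::{field,finite} mat \<Rightarrow> nat \<Rightarrow> nat \<Rightarrow> nat \<Rightarrow> bool" where
  "is_parity_check_matrix H N K D \<longleftrightarrow>
     dim_col H = N \<and> card (null_code H N) = card (UNIV :: 'a set) ^ K \<and> min_dist (null_code H N) = D"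

definition is_nn_decoder :: "'a vec set \<Rightarrow> nat \<Rightarrow> ('a vec \<Rightarrow> 'a vec) \<Rightarrow> bool" where
  "is_nn_decoder C N dec \<longleftrightarrow>
     (\<forall>r \<in> carrier_vec N. dec r \<in> C \<and> (\<forall>c \<in> C. hamming_dist r (dec r) \<le> hamming_dist r c))"

definition achieves_error :: "'a::{field,finite} vec set \<Rightarrow> nat \<Rightarrow> real \<Rightarrow> real \<Rightarrow> bool" where
  "achieves_error C N lam Pe \<longleftrightarrow>
     (\<exists>dec. is_nn_decoder C N dec \<and>
        (\<forall>c \<in> C. noise_event_prob lam N (\<lambda>e. dec (c + e) \<noteq> c) \<le> Pe))"

definition field_embedding :: "('a::field \<Rightarrow> 'b::field) \<Rightarrow> bool" where
  "field_embedding emb \<longleftrightarrow>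
     (\<forall>x y. emb (x + y) = emb x + emb y \<and> emb (x * y) = emb x * emb y) \<and> emb 1 = 1"

definition primitive_element :: "'b::{field,finite} \<Rightarrow> bool" where
  "primitive_element alpha \<longleftrightarrow> (\<forall>x. x \<noteq> 0 \<longrightarrow> (\<exists>k::nat. x = alpha ^ k))"

definition primitive_poly_root ::
    "('a::{field,finite} \<Rightarrow> 'b::{field,finite}) \<Rightarrow> nat \<Rightarrow> 'a poly \<Rightarrow> 'b \<Rightarrow> bool" where
  "primitive_poly_root emb s p alpha \<longleftrightarrow>
     lead_coeff p = 1 \<and> degree p = s \<and> irreducible p \<and> poly (map_poly emb p) alpha = 0
     \<and> primitive_element alpha"

(* field lifting phi_s : F_q^{Ms x n} \<rightarrow> F_{q^s}^{M x n} (0-based indices) *)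
definition field_lift ::
    "('a \<Rightarrow> 'b::comm_ring_1) \<Rightarrow> nat \<Rightarrow> 'b \<Rightarrow> 'a mat \<Rightarrow> 'b mat" where
  "field_lift emb s alpha C =
     mat (dim_row C div s) (dim_col C)
       (\<lambda>(k, l). \<Sum>t<s. emb (C $$ (k * s + t, l)) * alpha ^ t)"

end

theory Submission imports Defs "Berlekamp_Zassenhaus.Berlekamp_Type_Based" begin

lemma vec_Suc_decomp:
  assumes w: "w \<in> carrier_vec (Suc N)"
  shows "w = vCons (w $ 0) (vec N (\<lambda>i. w $ Suc i))"
proof (rule eq_vecI)
  fix i assume "i < dim_vec (vCons (w $ 0) (vec N (\<lambda>i. w $ Suc i)))"
  then show "w $ i = vCons (w $ 0) (vec N (\<lambda>i. w $ Suc i)) $ i"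
    by (cases i) auto
qed (use w in auto)

lemma carrier_vec_Suc_img:
  "carrier_vec (Suc N) = (\<lambda>(a,v). vCons a v) ` (UNIV \<times> carrier_vec N)"
proof
  show "carrier_vec (Suc N) \<subseteq> (\<lambda>(a,v). vCons a v) ` (UNIV \<times> carrier_vec N)"
  proof
    fix w assume w: "w \<in> carrier_vec (Suc N)"
    have "(w $ 0, vec N (\<lambda>i. w $ Suc i)) \<in> UNIV \<times> carrier_vec N" by simp
    moreover have "w = (\<lambda>(a,v). vCons a v) (w $ 0, vec N (\<lambda>i. w $ Suc i))"
      using vec_Suc_decomp[OF w] by simp
    ultimately show "w \<in> (\<lambda>(a,v). vCons a v) ` (UNIV \<times> carrier_vec N)"
      by (rule rev_image_eqI)
  qed
qed auto
lemma vCons_inj: "vCons a v = vCons (a'::'a) v' \<Longrightarrow> a = a' \<and> v = v'"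
proof -
  assume e: "vCons a v = vCons (a'::'a) v'"
  have "vCons a v $ 0 = vCons a' v' $ 0" using e by simp
  hence "a = a'" by simp
  moreover have d: "dim_vec v = dim_vec v'" using arg_cong[OF e, of dim_vec] by simp
  moreover have "v $ i = v' $ i" for i
  proof -
    have "vCons a v $ Suc i = vCons a' v' $ Suc i" using e by simp
    then show ?thesis by simp
  qed
  ultimately show "a = a' \<and> v = v'" using eq_vecI[of v' v] by auto
qed

lemma inj_vCons: "inj_on (\<lambda>(a,v). vCons a v) X"
  by (rule inj_onI) (auto dest: vCons_inj)

lemma snp_vCons: "sym_noise_prob lam (vCons a (v::'a::{zero,finite} vec)) =
   (if a = 0 then 1 - lam else lam / (real (card (UNIV :: 'a set)) - 1)) * sym_noise_prob lam v"
  unfolding sym_noise_prob_def dim_vec_vCons prod.lessThan_Suc_shift by simp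

lemma noise_total:
  assumes "card (UNIV :: 'a::{zero,finite} set) \<ge> 2"
  shows "(\<Sum>v\<in>(carrier_vec N :: 'a vec set). sym_noise_prob lam v) = 1"
proof (induction N)
  case 0
  have "(carrier_vec 0 :: 'a vec set) = {vNil}" by (auto intro: eq_vecI)
  then show ?case by (simp add: sym_noise_prob_def)
next
  case (Suc N)
  define f where "f = (\<lambda>a::'a. if a = 0 then 1 - lam else lam / (real (card (UNIV :: 'a set)) - 1))"
  have "(\<Sum>v\<in>(carrier_vec (Suc N) :: 'a vec set). sym_noise_prob lam v)
      = (\<Sum>x\<in>UNIV \<times> (carrier_vec N :: 'a vec set). sym_noise_prob lam ((\<lambda>(a,v). vCons a v) x))"
    unfolding carrier_vec_Suc_img by (rule sum.reindex[OF inj_vCons, unfolded comp_def])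
  also have "\<dots> = (\<Sum>a\<in>UNIV. \<Sum>v\<in>(carrier_vec N :: 'a vec set). f a * sym_noise_prob lam v)"
    by (simp add: sum.cartesian_product snp_vCons f_def case_prod_beta)
  also have "\<dots> = (\<Sum>a\<in>UNIV. f a)" using Suc by (simp add: sum_distrib_left[symmetric])
  also have "\<dots> = 1"
  proof -
    have "(\<Sum>a\<in>UNIV. f a) = f 0 + (\<Sum>a\<in>UNIV - {0}. f a)"
      by (simp add: sum.remove)
    also have "(\<Sum>a\<in>UNIV - {0}. f a) = real (card (UNIV - {0::'a})) * (lam / (real (card (UNIV :: 'a set)) - 1))"
      by (simp add: f_def)
    also have "real (card (UNIV - {0::'a})) = real (card (UNIV :: 'a set)) - 1"
      by (simp add: card_Diff_singleton of_nat_diff)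
    finally show ?thesis using assms by (simp add: f_def)
  qed
  finally show ?case .
qed
lemma emb_props:
  assumes "field_embedding (emb :: 'a::field \<Rightarrow> 'b::field)"
  shows emb_0: "emb 0 = 0" and emb_nz: "x \<noteq> 0 \<Longrightarrow> emb x \<noteq> 0"
    and emb_add: "emb (y + z) = emb y + emb z" and emb_mult: "emb (y * z) = emb y * emb z"
proof -
  show a: "emb (y + z) = emb y + emb z" "emb (y * z) = emb y * emb z"
    using assms unfolding field_embedding_def by auto
  have "emb (0 + 0) = emb 0 + emb 0" using assms unfolding field_embedding_def by blast
  then show "emb 0 = 0" by (metis add.right_neutral add_left_cancel)
  assume x: "x \<noteq> 0"
  have "emb (x * inverse x) = emb x * emb (inverse x)" using assms unfolding field_embedding_def by blast
  moreover have "emb (x * inverse x) = 1" using x assms unfolding field_embedding_def by simp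
  ultimately show "emb x \<noteq> 0" by auto
qed

lemma emb_sum:
  assumes "field_embedding (emb :: 'a::field \<Rightarrow> 'b::field)"
  shows "emb (\<Sum>i\<in>I. f i) = (\<Sum>i\<in>I. emb (f i))"
proof (cases "finite I")
  case True then show ?thesis
    by (induction rule: finite_induct) (auto simp: emb_0[OF assms] emb_add[OF assms])
qed (simp add: emb_0[OF assms])

lemma lift_null:
  fixes emb :: "'a::field \<Rightarrow> 'b::field"
  assumes emb: "field_embedding emb"
    and M: "M \<in> carrier_mat (m'' * s) n"
    and v: "v \<in> carrier_vec n" and Mv: "M *\<^sub>v v = 0\<^sub>v (m'' * s)"
  shows "field_lift emb s alpha M *\<^sub>v vec n (\<lambda>j. emb (v $ j)) = 0\<^sub>v (dim_row (field_lift emb s alpha M))"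
proof (rule eq_vecI)
  fix k assume k: "k < dim_vec (0\<^sub>v (dim_row (field_lift emb s alpha M)) :: 'b vec)"
  hence k': "k < m'' * s div s" using M by (simp add: field_lift_def)
  have rows: "k * s + t < m'' * s" if "t < s" for t
  proof -
    have "k * s + t < (k + 1) * s" using that by simp
    also have "(k+1) * s \<le> (m'' * s div s) * s" using k' by (intro mult_right_mono) auto
    also have "\<dots> \<le> m'' * s" by simp
    finally show ?thesis .
  qed
  have z: "(\<Sum>l<n. M $$ (k * s + t, l) * v $ l) = 0" if "t < s" for t
  proof -
    have "(M *\<^sub>v v) $ (k * s + t) = 0" using Mv rows[OF that] by simp
    moreover have "(M *\<^sub>v v) $ (k * s + t) = (\<Sum>l<n. M $$ (k * s + t, l) * v $ l)"
      using rows[OF that] M v by (auto simp: scalar_prod_def lessThan_atLeast0)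
    ultimately show ?thesis by simp
  qed
  show "(field_lift emb s alpha M *\<^sub>v vec n (\<lambda>j. emb (v $ j))) $ k =
         0\<^sub>v (dim_row (field_lift emb s alpha M)) $ k"
  proof -
    have "(field_lift emb s alpha M *\<^sub>v vec n (\<lambda>j. emb (v $ j))) $ k
      = (\<Sum>l<n. (\<Sum>t<s. emb (M $$ (k * s + t, l)) * alpha ^ t) * emb (v $ l))"
      using k k' M by (simp add: field_lift_def scalar_prod_def lessThan_atLeast0)
    also have "\<dots> = (\<Sum>t<s. alpha ^ t * emb (\<Sum>l<n. M $$ (k * s + t, l) * v $ l))"
      by (simp add: emb_sum[OF emb] emb_mult[OF emb] sum_distrib_left sum_distrib_right
          sum.swap[of _ "{..<n}"] mult_ac)
    also have "\<dots> = 0" using z by (simp add: emb_0[OF emb])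
    finally show ?thesis using k by simp
  qed
qed (simp add: field_lift_def)

lemma card_ge2: "card (UNIV :: 'a::{field,finite} set) \<ge> 2"
proof -
  have "card {0::'a, 1} = 2" by simp
  moreover have "card {0::'a, 1} \<le> card (UNIV :: 'a set)" by (rule card_mono) auto
  ultimately show ?thesis by simp
qed

lemma snp_nonneg:
  assumes "0 \<le> lam" "lam \<le> 1" "card (UNIV :: 'a::{zero,finite} set) \<ge> 2"
  shows "sym_noise_prob lam (v :: 'a vec) \<ge> 0"
  unfolding sym_noise_prob_def using assms by (intro prod_nonneg) auto

lemma sparse_support:
  assumes "x \<in> sparse_vecs n b" "x' \<in> sparse_vecs n b"
  shows "card {j. j < n \<and> (x - x') $ j \<noteq> (0::'a::ab_group_add)} \<le> 2 * b"
proof -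
  have dx: "dim_vec x = n" "dim_vec x' = n" using assms by (auto simp: sparse_vecs_def)
  have "{j. j < n \<and> (x - x') $ j \<noteq> 0} \<subseteq> {j. j < n \<and> x $ j \<noteq> 0} \<union> {j. j < n \<and> x' $ j \<noteq> 0}"
    using dx by auto
  hence "card {j. j < n \<and> (x - x') $ j \<noteq> 0} \<le> card ({j. j < n \<and> x $ j \<noteq> 0} \<union> {j. j < n \<and> x' $ j \<noteq> 0})"
    by (intro card_mono) auto
  also have "\<dots> \<le> card {j. j < n \<and> x $ j \<noteq> 0} + card {j. j < n \<and> x' $ j \<noteq> 0}"
    by (rule card_Un_le)
  also have "\<dots> \<le> b + b" using assms dx by (intro add_mono) (auto simp: sparse_vecs_def hamming_wt_def)
  finally show ?thesis by simp
qed

theorem theorem2: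
  fixes emb :: "'a::{field,finite} \<Rightarrow> 'b::{field,finite}"
    and alpha :: 'b and p :: "'a poly"
    and lam Pe :: real
    and b n m m' m'' s c d d' :: nat
    and G A' A :: "'a mat"
  assumes "0 < b" and "b < n"
    and "card (UNIV :: 'b set) = card (UNIV :: 'a set) ^ s"
    and "field_embedding emb"
    and "primitive_poly_root emb s p alpha"
    and "0 < lam" and "lam < 1 - 1 / real (card (UNIV :: 'a set))"
    and "m = c * m'" and "c * m'' * s \<le> m"
    and "real c > 1 / (1 - Hq (card (UNIV :: 'a set)) lam)"
    and "is_generator_matrix G m m' d"
    and "achieves_error (gen_code G) m lam Pe"
    and "A' \<in> carrier_mat m' n"
    and "A = G * A'"
    and "\<exists>r. inj_on r {..<m'' * s} \<and> r ` {..<m'' * s} \<subseteq> {..<m'} \<and>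
           is_parity_check_matrix
             (field_lift emb s alpha (mat (m'' * s) n (\<lambda>(i, j). A' $$ (r i, j))))
             n (n - m'') d'"
    and "d' > 2 * b"
  shows "\<exists>D. \<forall>x \<in> sparse_vecs n b.
           noise_event_prob lam m (\<lambda>e. D (A *\<^sub>v x + e) = x) \<ge> 1 - Pe"
proof -
  note emb = assms(4)
  have G: "G \<in> carrier_mat m m'" and cardG: "card (gen_code G) = CARD('a) ^ m'"
    using assms(11) by (auto simp: is_generator_matrix_def)
  have A': "A' \<in> carrier_mat m' n" by fact
  obtain r where r: "r ` {..<m'' * s} \<subseteq> {..<m'}" and
    pc: "is_parity_check_matrix
             (field_lift emb s alpha (mat (m'' * s) n (\<lambda>(i, j). A' $$ (r i, j))))
             n (n - m'') d'" using assms(15) by blast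
  define M where "M = mat (m'' * s) n (\<lambda>(i, j). A' $$ (r i, j))"
  define H where "H = field_lift emb s alpha M"
  have M: "M \<in> carrier_mat (m'' * s) n" by (simp add: M_def)
  have Hd: "min_dist (null_code H n) = d'" using pc by (simp add: is_parity_check_matrix_def H_def M_def)
  have injG: "inj_on (\<lambda>u. G *\<^sub>v u) (carrier_vec m')"
  proof (rule eq_card_imp_inj_on)
    show "finite (carrier_vec m' :: 'a vec set)" by simp
    have "gen_code G = (\<lambda>u. G *\<^sub>v u) ` carrier_vec m'" using G by (auto simp: gen_code_def)
    then show "card ((\<lambda>u. G *\<^sub>v u) ` carrier_vec m') = card (carrier_vec m' :: 'a vec set)"
      using cardG by (simp add: card_carrier_vec)
  qed
  have uniq: "x = x'" if x: "x \<in> sparse_vecs n b" and x': "x' \<in> sparse_vecs n b"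
    and eq: "A *\<^sub>v x = A *\<^sub>v x'" for x x'
  proof (rule ccontr)
    assume ne: "x \<noteq> x'"
    have xc: "x \<in> carrier_vec n" "x' \<in> carrier_vec n" using x x' by (auto simp: sparse_vecs_def)
    have "G *\<^sub>v (A' *\<^sub>v x) = G *\<^sub>v (A' *\<^sub>v x')" using eq xc G A' assms(14) by simp
    hence A'eq: "A' *\<^sub>v x = A' *\<^sub>v x'" using injG A' xc by (auto dest: inj_onD)
    define v where "v = x - x'"
    have vc: "v \<in> carrier_vec n" using xc by (simp add: v_def)
    have A'v: "A' *\<^sub>v v = 0\<^sub>v m'"
      using A'eq A' xc by (simp add: v_def mult_minus_distrib_mat_vec)
    have Mv: "M *\<^sub>v v = 0\<^sub>v (m'' * s)"
    proof (rule eq_vecI)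
      fix i assume "i < dim_vec (0\<^sub>v (m'' * s) :: 'a vec)"
      hence i: "i < m'' * s" by simp
      have ri: "r i < m'" using r i by auto
      have "(M *\<^sub>v v) $ i = row M i \<bullet> v" using i M by simp
      also have "row M i = row A' (r i)" using i ri A' by (auto simp: M_def)
      also have "row A' (r i) \<bullet> v = (A' *\<^sub>v v) $ r i" using ri A' by simp
      finally show "(M *\<^sub>v v) $ i = 0\<^sub>v (m'' * s) $ i" using A'v ri i by simp
    qed (simp add: M_def)
    define w where "w = vec n (\<lambda>j. emb (v $ j))"
    have wnull: "w \<in> null_code H n"
      using lift_null[OF emb M vc Mv] by (simp add: null_code_def w_def H_def)
    have znull: "0\<^sub>v n \<in> null_code H n" using M by (auto simp: null_code_def H_def field_lift_def scalar_prod_def intro!: eq_vecI)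
    have "\<exists>j<n. v $ j \<noteq> 0"
    proof (rule ccontr)
      assume "\<not> (\<exists>j<n. v $ j \<noteq> 0)"
      hence h: "v $ j = 0" if "j < n" for j using that by simp
      have "x = x'"
      proof (rule eq_vecI)
        fix j assume "j < dim_vec x'"
        then show "x $ j = x' $ j" using h[of j] xc by (simp add: v_def)
      qed (use xc in simp)
      with ne show False by simp
    qed
    then obtain j where j: "j < n" "v $ j \<noteq> 0" by blast
    have wne: "w \<noteq> 0\<^sub>v n"
    proof
      assume "w = 0\<^sub>v n"
      hence "w $ j = 0" using j by simp
      thus False using j emb_nz[OF emb] by (simp add: w_def)
    qed
    have "hamming_dist w (0\<^sub>v n) = card {j. j < n \<and> v $ j \<noteq> 0}"
      unfolding hamming_dist_def w_def using emb_nz[OF emb] emb_0[OF emb]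
      by (intro arg_cong[where f=card]) auto
    also have "\<dots> \<le> 2 * b" using sparse_support[OF x x'] by (simp add: v_def)
    finally have hd: "hamming_dist w (0\<^sub>v n) \<le> 2 * b" .
    have "min_dist (null_code H n) \<le> hamming_dist w (0\<^sub>v n)"
      unfolding min_dist_def using wnull znull wne by (intro cInf_lower) auto
    with hd Hd assms(16) show False by simp
  qed
  obtain dec where dec: "is_nn_decoder (gen_code G) m dec"
    and err: "\<forall>c \<in> gen_code G. noise_event_prob lam m (\<lambda>e. dec (c + e) \<noteq> c) \<le> Pe"
    using assms(12) by (auto simp: achieves_error_def)
  define D where "D = (\<lambda>y. SOME z :: 'a vec. z \<in> sparse_vecs n b \<and> dec y = A *\<^sub>v z)"
  have q2: "card (UNIV :: 'a set) \<ge> 2" by (rule card_ge2)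
  have lam1: "lam \<le> 1" using assms(7) by (smt (verit) divide_nonneg_nonneg of_nat_0_le_iff)
  show ?thesis
  proof (intro exI ballI)
    fix x :: "'a vec" assume x: "x \<in> sparse_vecs n b"
    have xc: "x \<in> carrier_vec n" using x by (auto simp: sparse_vecs_def)
    define cw where "cw = A *\<^sub>v x"
    have cwG: "cw \<in> gen_code G" unfolding gen_code_def cw_def
      using G A' xc assms(14) by (auto intro!: exI[of _ "A' *\<^sub>v x"])
    let ?C = "carrier_vec m :: 'a vec set"
    let ?P = "\<lambda>e. dec (cw + e) = cw"
    have sub: "{e \<in> ?C. ?P e} \<subseteq> {e \<in> ?C. D (A *\<^sub>v x + e) = x}"
    proof clarify
      fix e assume e: "e \<in> ?C" "dec (cw + e) = cw"
      have ex: "\<exists>z. z \<in> sparse_vecs n b \<and> dec (cw + e) = A *\<^sub>v z" using x e cw_def by auto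
      have "D (cw + e) \<in> sparse_vecs n b \<and> dec (cw + e) = A *\<^sub>v D (cw + e)"
        unfolding D_def by (rule someI_ex[OF ex])
      then show "D (A *\<^sub>v x + e) = x" using uniq x e cw_def by auto
    qed
    have nn: "\<And>v. sym_noise_prob lam (v :: 'a vec) \<ge> 0"
      using snp_nonneg[OF _ lam1 q2] assms(6) by simp
    have "1 = (\<Sum>v\<in>?C. sym_noise_prob lam v)" using noise_total[OF q2] by simp
    also have "\<dots> = (\<Sum>v\<in>{e \<in> ?C. ?P e}. sym_noise_prob lam v) + (\<Sum>v\<in>{e \<in> ?C. \<not> ?P e}. sym_noise_prob lam v)"
      by (subst sum.union_disjoint[symmetric]) (auto intro: sum.cong)
    also have "(\<Sum>v\<in>{e \<in> ?C. \<not> ?P e}. sym_noise_prob lam v) \<le> Pe"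
      using err cwG unfolding noise_event_prob_def by auto
    also have "(\<Sum>v\<in>{e \<in> ?C. ?P e}. sym_noise_prob lam v) \<le> (\<Sum>v\<in>{e \<in> ?C. D (A *\<^sub>v x + e) = x}. sym_noise_prob lam v)"
      using sub nn by (intro sum_mono2) auto
    finally show "noise_event_prob lam m (\<lambda>e. D (A *\<^sub>v x + e) = x) \<ge> 1 - Pe"
      unfolding noise_event_prob_def by simp
  qed
qed
end
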